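(* In the standing setup, let $g=B^{\rm T}f$ with $f=f_0$ be associated to $f$ via $B=\alpha I+\beta A+\gamma A^2$, $B^2=I$. Then for every vector $v\in\mathbb C^6$, $$g''v=f''(B^{\rm T}v),\qquad f''v=g''(B^{\rm T}v),$$ equivalently $B^{\rm T}(f''v)=f''(B^{\rm T}v)$ and $B^{\rm T}(g''v)=g''(B^{\rm T}v)$.
   Context: Standing setup: $J=\begin{pmatrix}0&I_3\\-I_3&0\end{pmatrix}$ ($6\times6$). $A$ is a fixed real $6\times 6$ skew-Hamiltonian matrix ($A^{\rm T}J=JA$). $H_0$ is a homogeneous cubic polynomial on $\mathbb R^6$ with $A\nabla^2H_0(x)=\nabla^2H_0(x)A^{\rm T}$ for all $x$, $H_1,H_2$ homogeneous cubic polynomials with $\nabla H_1=A\nabla H_0$, $\nabla H_2=A\nabla H_1$, $f_i=J\nabla H_i$. For a quadratic vector field $h$, the second derivative $h''$ is a constant tensor, and for a vector $v$, $h''v$ denotes the $6\times6$ matrix with entries $(h''v)_{ij}=\sum_\ell \frac{\partial^2h_i}{\partial x_j\partial x_\ell}v_\ell$. Associated field: if $B=\alpha I+\beta A+\gamma A^2$ with $B^2=I$, then $g=B^{\rm T}f_0$. *)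

theory Defs
  imports "HOL-Analysis.Analysis"
begin

text \<open>Conventions: points of R^6 are functions nat => real, only coordinates 0..5
  matter; 6x6 matrices are functions nat => nat => real with indices below 6.
  Partial derivatives are genuine real derivatives along coordinate directions.\<close>

definition pd :: "nat \<Rightarrow> ((nat \<Rightarrow> real) \<Rightarrow> real) \<Rightarrow> (nat \<Rightarrow> real) \<Rightarrow> real" where
  "pd i F x = deriv (\<lambda>t. F (x(i := x i + t))) 0"

definition grad :: "((nat \<Rightarrow> real) \<Rightarrow> real) \<Rightarrow> (nat \<Rightarrow> real) \<Rightarrow> nat \<Rightarrow> real" where
  "grad F x i = pd i F x"

definition hess :: "((nat \<Rightarrow> real) \<Rightarrow> real) \<Rightarrow> (nat \<Rightarrow> real) \<Rightarrow> nat \<Rightarrow> nat \<Rightarrow> real" where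
  "hess F x i j = pd j (\<lambda>y. pd i F y) x"

definition hom_cubic :: "((nat \<Rightarrow> real) \<Rightarrow> real) \<Rightarrow> bool" where
  "hom_cubic H \<longleftrightarrow> (\<exists>c :: nat \<Rightarrow> nat \<Rightarrow> nat \<Rightarrow> real. \<forall>x.
     H x = (\<Sum>i<6. \<Sum>j<6. \<Sum>k<6. c i j k * x i * x j * x k))"

definition idm :: "nat \<Rightarrow> nat \<Rightarrow> real" where
  "idm i j = (if i = j then 1 else 0)"

definition mmul :: "(nat \<Rightarrow> nat \<Rightarrow> 'a::comm_semiring_1) \<Rightarrow> (nat \<Rightarrow> nat \<Rightarrow> 'a) \<Rightarrow> nat \<Rightarrow> nat \<Rightarrow> 'a" where
  "mmul X Y i j = (\<Sum>k<6. X i k * Y k j)"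

definition mvec :: "(nat \<Rightarrow> nat \<Rightarrow> 'a::comm_semiring_1) \<Rightarrow> (nat \<Rightarrow> 'a) \<Rightarrow> nat \<Rightarrow> 'a" where
  "mvec X v i = (\<Sum>k<6. X i k * v k)"

definition tr :: "(nat \<Rightarrow> nat \<Rightarrow> 'a) \<Rightarrow> nat \<Rightarrow> nat \<Rightarrow> 'a" where
  "tr X i j = X j i"

definition cmat :: "(nat \<Rightarrow> nat \<Rightarrow> real) \<Rightarrow> nat \<Rightarrow> nat \<Rightarrow> complex" where
  "cmat X i j = complex_of_real (X i j)"

text \<open>J = [[0, I3], [-I3, 0]]\<close>
definition Jm :: "nat \<Rightarrow> nat \<Rightarrow> real" where
  "Jm i j = (if i < 3 \<and> j = i + 3 then 1 else if 3 \<le> i \<and> i < 6 \<and> j + 3 = i then -1 else 0)"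

definition mat_eq6 :: "(nat \<Rightarrow> nat \<Rightarrow> 'a) \<Rightarrow> (nat \<Rightarrow> nat \<Rightarrow> 'a) \<Rightarrow> bool" where
  "mat_eq6 X Y \<longleftrightarrow> (\<forall>i<6. \<forall>j<6. X i j = Y i j)"

definition hamvf :: "((nat \<Rightarrow> real) \<Rightarrow> real) \<Rightarrow> (nat \<Rightarrow> real) \<Rightarrow> nat \<Rightarrow> real" where
  "hamvf H x = mvec Jm (grad H x)"

text \<open>(h'' v)_{ij} = sum_l d^2 h_i / dx_j dx_l * v_l, evaluated at the point x
  (constant in x for quadratic h), for complex v.\<close>
definition d2v :: "((nat \<Rightarrow> real) \<Rightarrow> nat \<Rightarrow> real) \<Rightarrow> (nat \<Rightarrow> real) \<Rightarrow> (nat \<Rightarrow> complex) \<Rightarrow> nat \<Rightarrow> nat \<Rightarrow> complex" where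
  "d2v h x v i j = (\<Sum>l<6. complex_of_real (pd l (\<lambda>y. pd j (\<lambda>z. h z i) y) x) * v l)"

end

theory Submission
  imports Defs
begin

lemma upd_eq: "(x(i := x i + t)) j = x j + t * (if j = i then 1 else (0::real))"
  by auto

lemma sd: "i < (6::nat) \<Longrightarrow> (\<Sum>a<6. (if a = i then 1 else 0) * G a) = (G i :: real)"
proof -
  have "(\<Sum>a<6. (if a = i then 1 else 0) * G a) = (\<Sum>a<6. if a = i then G a else 0)"
    by (rule sum.cong) auto
  thus "i < (6::nat) \<Longrightarrow> ?thesis" by simp
qed

lemma pd_lin: assumes "i < (6::nat)"
  shows "pd i (\<lambda>x. \<Sum>k<6. E k * x k) x = E i"
proof -
  have "((\<lambda>t. \<Sum>k<6. E k * (x(i := x i + t)) k) has_field_derivative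
     (\<Sum>k<6. (if k = i then 1 else 0) * E k)) (at 0)"
    unfolding upd_eq
    by (rule derivative_eq_intros refl | simp add: mult_ac)+
  then show ?thesis unfolding pd_def using assms sd[of i E]
    by (auto dest!: DERIV_imp_deriv)
qed

lemma pd_quad: assumes "i < (6::nat)"
  shows "pd i (\<lambda>x. \<Sum>j<6. \<Sum>k<6. D j k * x j * x k) x = (\<Sum>k<6. (D i k + D k i) * x k)"
proof -
  let ?d = "\<lambda>j. (if j = i then 1 else 0::real)"
  have "((\<lambda>t. \<Sum>j<6. \<Sum>k<6. D j k * (x(i := x i + t)) j * (x(i := x i + t)) k) has_field_derivative
     (\<Sum>j<6. \<Sum>k<6. ?d j * (D j k * x k) + ?d k * (D j k * x j))) (at 0)"
    unfolding upd_eq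
    by (rule derivative_eq_intros refl | simp add: algebra_simps)+
  then have "pd i (\<lambda>x. \<Sum>j<6. \<Sum>k<6. D j k * x j * x k) x = (\<Sum>j<6. \<Sum>k<6. ?d j * (D j k * x k) + ?d k * (D j k * x j))"
    unfolding pd_def by (rule DERIV_imp_deriv)
  also have "\<dots> = (\<Sum>j<6. ?d j * (\<Sum>k<6. D j k * x k)) + (\<Sum>j<6. \<Sum>k<6. ?d k * (D j k * x j))"
    by (simp add: sum.distrib sum_distrib_left)
  also have "(\<Sum>j<6. ?d j * (\<Sum>k<6. D j k * x k)) = (\<Sum>k<6. D i k * x k)"
    using sd[OF assms] by simp
  also have "(\<Sum>j<6. \<Sum>k<6. ?d k * (D j k * x j)) = (\<Sum>j<6. D j i * x j)"
    using sd[OF assms] by simp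
  finally show ?thesis by (simp add: sum.distrib algebra_simps)
qed

lemma pd_cub: assumes "i < (6::nat)"
  shows "pd i (\<lambda>x. \<Sum>a<6. \<Sum>b<6. \<Sum>c<6. C a b c * x a * x b * x c) x
     = (\<Sum>a<6. \<Sum>b<6. (C i a b + C a i b + C a b i) * x a * x b)"
proof -
  let ?d = "\<lambda>j. (if j = i then 1 else 0::real)"
  have "((\<lambda>t. \<Sum>a<6. \<Sum>b<6. \<Sum>c<6. C a b c * (x(i := x i + t)) a * (x(i := x i + t)) b * (x(i := x i + t)) c) has_field_derivative
     (\<Sum>a<6. \<Sum>b<6. \<Sum>c<6. ?d a * (C a b c * x b * x c) + ?d b * (C a b c * x a * x c) + ?d c * (C a b c * x a * x b))) (at 0)"
    unfolding upd_eq
    by (rule derivative_eq_intros refl | simp add: algebra_simps)+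
  then have "pd i (\<lambda>x. \<Sum>a<6. \<Sum>b<6. \<Sum>c<6. C a b c * x a * x b * x c) x = (\<Sum>a<6. \<Sum>b<6. \<Sum>c<6. ?d a * (C a b c * x b * x c) + ?d b * (C a b c * x a * x c) + ?d c * (C a b c * x a * x b))"
    unfolding pd_def by (rule DERIV_imp_deriv)
  also have "\<dots> = (\<Sum>a<6. ?d a * (\<Sum>b<6. \<Sum>c<6. C a b c * x b * x c)) + (\<Sum>a<6. \<Sum>b<6. ?d b * (\<Sum>c<6. C a b c * x a * x c)) + (\<Sum>a<6. \<Sum>b<6. \<Sum>c<6. ?d c * (C a b c * x a * x b))"
    by (simp add: sum.distrib sum_distrib_left)
  also have "(\<Sum>a<6. ?d a * (\<Sum>b<6. \<Sum>c<6. C a b c * x b * x c)) = (\<Sum>a<6. \<Sum>b<6. C i a b * x a * x b)"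
    using sd[OF assms] by simp
  also have "(\<Sum>a<6. \<Sum>b<6. ?d b * (\<Sum>c<6. C a b c * x a * x c)) = (\<Sum>a<6. \<Sum>b<6. C a i b * x a * x b)"
    using sd[OF assms] by simp
  also have "(\<Sum>a<6. \<Sum>b<6. \<Sum>c<6. ?d c * (C a b c * x a * x b)) = (\<Sum>a<6. \<Sum>b<6. C a b i * x a * x b)"
    using sd[OF assms] by simp
  finally show ?thesis by (simp add: sum.distrib algebra_simps)
qed


lemma mmul_assoc: "mmul (mmul X Y) Z i j = mmul X (mmul Y Z) i (j::nat)"
proof -
  have "mmul (mmul X Y) Z i j = (\<Sum>k<6. \<Sum>m<6. X i m * Y m k * Z k j)"
    unfolding mmul_def by (simp add: sum_distrib_right)
  also have "\<dots> = (\<Sum>m<6. \<Sum>k<6. X i m * Y m k * Z k j)" by (rule sum.swap)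
  also have "\<dots> = mmul X (mmul Y Z) i j"
    unfolding mmul_def by (simp add: sum_distrib_left mult.assoc)
  finally show ?thesis .
qed

lemma mmul_cong_l: "(\<And>k. k < 6 \<Longrightarrow> X i k = X' i k) \<Longrightarrow> mmul X Y i j = mmul X' Y i j"
  unfolding mmul_def by (rule sum.cong) auto
lemma mmul_cong_r: "(\<And>k. k < 6 \<Longrightarrow> Y k j = Y' k j) \<Longrightarrow> mmul X Y i j = mmul X Y' i j"
  unfolding mmul_def by (rule sum.cong) auto

lemma sd': "i < (6::nat) \<Longrightarrow> (\<Sum>a<6. G a * (if a = i then 1 else 0)) = (G i :: real)"
  using sd[of i G] by (simp add: mult.commute)

lemma quad_comb: "(\<Sum>k<(6::nat). w k * (\<Sum>a<6. \<Sum>b<6. D k a b * z a * z b)) =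
   (\<Sum>a<6. \<Sum>b<6. (\<Sum>k<6. w k * D k a b) * z a * (z b::real))"
proof -
  have "(\<Sum>k<6. w k * (\<Sum>a<6. \<Sum>b<6. D k a b * z a * z b)) = (\<Sum>k<6. \<Sum>a<6. \<Sum>b<6. w k * D k a b * z a * z b)"
    by (simp add: sum_distrib_left mult.assoc)
  also have "\<dots> = (\<Sum>a<6. \<Sum>k<6. \<Sum>b<6. w k * D k a b * z a * z b)" by (rule sum.swap)
  also have "\<dots> = (\<Sum>a<6. \<Sum>b<6. \<Sum>k<6. w k * D k a b * z a * z b)" by (rule sum.cong[OF refl], rule sum.swap)
  also have "\<dots> = (\<Sum>a<6. \<Sum>b<6. (\<Sum>k<6. w k * D k a b) * z a * (z b::real))"
    by (simp add: sum_distrib_right)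
  finally show ?thesis .
qed

definition PS :: "(nat \<Rightarrow> nat \<Rightarrow> nat \<Rightarrow> real) \<Rightarrow> (nat \<Rightarrow> nat \<Rightarrow> real) \<Rightarrow> bool" where
  "PS S M \<longleftrightarrow> (\<forall>p<6. \<forall>j<6. \<forall>l<6. (\<Sum>k<6. M p k * S k j l) = (\<Sum>n<6. S p j n * M l n))"

lemma m01: "(x::real) * (if P then 1 else 0) = (if P then x else 0)"
  "(if P then 1 else 0) * (x::real) = (if P then x else 0)" by auto

lemma PS_idm: "PS S idm"
  unfolding PS_def idm_def by (simp add: m01 sum.delta sum.delta')

lemma PS_lin: "PS S X \<Longrightarrow> PS S Y \<Longrightarrow> PS S Z \<Longrightarrow>
   PS S (\<lambda>i j. a * X i j + b * Y i j + c * Z i j)"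
  unfolding PS_def by (simp add: algebra_simps sum.distrib sum_distrib_left[symmetric])

lemma PS_mul: assumes "PS S X" shows "PS S (mmul X X)"
  unfolding PS_def
proof (intro allI impI)
  fix p j l :: nat assume h: "p < 6" "j < 6" "l < 6"
  have "(\<Sum>k<6. mmul X X p k * S k j l) = (\<Sum>k<6. \<Sum>q<6. X p q * X q k * S k j l)"
    unfolding mmul_def by (simp add: sum_distrib_right)
  also have "\<dots> = (\<Sum>q<6. X p q * (\<Sum>k<6. X q k * S k j l))"
    by (subst sum.swap) (simp add: sum_distrib_left mult.assoc)
  also have "\<dots> = (\<Sum>q<6. X p q * (\<Sum>n<6. S q j n * X l n))"
    using assms(1) h unfolding PS_def by (intro sum.cong) auto
  also have "\<dots> = (\<Sum>q<6. \<Sum>n<6. X l n * (X p q * S q j n))"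
    by (simp add: sum_distrib_left mult_ac)
  also have "\<dots> = (\<Sum>n<6. X l n * (\<Sum>q<6. X p q * S q j n))"
    by (subst sum.swap) (simp add: sum_distrib_left)
  also have "\<dots> = (\<Sum>n<6. X l n * (\<Sum>m<6. S p j m * X n m))"
    using assms(1) h unfolding PS_def by (intro sum.cong) auto
  also have "\<dots> = (\<Sum>m<6. S p j m * mmul X X l m)"
    unfolding mmul_def sum_distrib_left sum_distrib_right by (subst sum.swap) (simp add: mult_ac)
  finally show "(\<Sum>k<6. mmul X X p k * S k j l) = (\<Sum>n<6. S p j n * mmul X X l n)" .
qed

definition PJ :: "(nat \<Rightarrow> nat \<Rightarrow> real) \<Rightarrow> bool" where
  "PJ M \<longleftrightarrow> (\<forall>i<6. \<forall>k<6. (\<Sum>m<6. M m i * Jm m k) = (\<Sum>p<6. Jm i p * M p k))"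

lemma PJ_idm: "PJ idm"
  unfolding PJ_def idm_def by (simp add: m01 sum.delta sum.delta')

lemma PJ_lin: "PJ X \<Longrightarrow> PJ Y \<Longrightarrow> PJ Z \<Longrightarrow>
   PJ (\<lambda>i j. a * X i j + b * Y i j + c * Z i j)"
  unfolding PJ_def by (simp add: algebra_simps sum.distrib sum_distrib_left[symmetric])

lemma PJ_mul: assumes "PJ X" shows "PJ (mmul X X)"
  unfolding PJ_def
proof (intro allI impI)
  fix i k :: nat assume h: "i < 6" "k < 6"
  have "(\<Sum>m<6. mmul X X m i * Jm m k) = (\<Sum>m<6. \<Sum>q<6. X q i * (X m q * Jm m k))"
    unfolding mmul_def by (simp add: sum_distrib_right sum_distrib_left mult_ac)
  also have "\<dots> = (\<Sum>q<6. X q i * (\<Sum>m<6. X m q * Jm m k))"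
    by (subst sum.swap) (simp add: sum_distrib_left)
  also have "\<dots> = (\<Sum>q<6. X q i * (\<Sum>p<6. Jm q p * X p k))"
    using assms h unfolding PJ_def by (intro sum.cong) auto
  also have "\<dots> = (\<Sum>q<6. \<Sum>p<6. X p k * (X q i * Jm q p))"
    by (simp add: sum_distrib_left mult_ac)
  also have "\<dots> = (\<Sum>p<6. X p k * (\<Sum>q<6. X q i * Jm q p))"
    by (subst sum.swap) (simp add: sum_distrib_left)
  also have "\<dots> = (\<Sum>p<6. X p k * (\<Sum>r<6. Jm i r * X r p))"
    using assms h unfolding PJ_def by (intro sum.cong) auto
  also have "\<dots> = (\<Sum>r<6. Jm i r * mmul X X r k)"
    unfolding mmul_def sum_distrib_left sum_distrib_right by (subst sum.swap) (simp add: mult_ac)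
  finally show "(\<Sum>m<6. mmul X X m i * Jm m k) = (\<Sum>p<6. Jm i p * mmul X X p k)" .
qed

lemma keyK:
  assumes "PS S B" "PJ B" "i < 6" "j < 6" "l < 6"
  shows "(\<Sum>m<6. B m i * (\<Sum>k<6. Jm m k * S k j l)) = (\<Sum>n<6. (\<Sum>k<6. Jm i k * S k j n) * B l n)"
proof -
  have "(\<Sum>m<6. B m i * (\<Sum>k<6. Jm m k * S k j l)) = (\<Sum>m<6. \<Sum>k<6. S k j l * (B m i * Jm m k))"
    by (simp add: sum_distrib_left mult_ac)
  also have "\<dots> = (\<Sum>k<6. S k j l * (\<Sum>m<6. B m i * Jm m k))"
    by (subst sum.swap) (simp add: sum_distrib_left)
  also have "\<dots> = (\<Sum>k<6. S k j l * (\<Sum>p<6. Jm i p * B p k))"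
    using assms unfolding PJ_def by (intro sum.cong) auto
  also have "\<dots> = (\<Sum>k<6. \<Sum>p<6. Jm i p * (B p k * S k j l))"
    by (simp add: sum_distrib_left mult_ac)
  also have "\<dots> = (\<Sum>p<6. Jm i p * (\<Sum>k<6. B p k * S k j l))"
    by (subst sum.swap) (simp add: sum_distrib_left)
  also have "\<dots> = (\<Sum>p<6. Jm i p * (\<Sum>n<6. S p j n * B l n))"
    using assms unfolding PS_def by (intro sum.cong) auto
  also have "\<dots> = (\<Sum>n<6. (\<Sum>k<6. Jm i k * S k j n) * B l n)"
    unfolding sum_distrib_left sum_distrib_right by (subst sum.swap) (simp add: mult_ac)
  finally show ?thesis .
qed

lemma d2quad:
  assumes "\<forall>z. h z i = (\<Sum>a<6. \<Sum>b<6. Q a b * z a * z b)" "j < (6::nat)" "l < (6::nat)"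
  shows "pd l (\<lambda>y. pd j (\<lambda>z. h z i) y) x = Q j l + Q l j"
proof -
  have e: "(\<lambda>z. h z i) = (\<lambda>z. \<Sum>a<6. \<Sum>b<6. Q a b * z a * z b)" using assms(1) by auto
  have "(\<lambda>y. pd j (\<lambda>z. h z i) y) = (\<lambda>y. \<Sum>k<6. (Q j k + Q k j) * y k)"
    unfolding e using pd_quad[OF assms(2)] by auto
  then show ?thesis using pd_lin[OF assms(3)] by simp
qed
theorem mainTheorem9:
  fixes A :: "nat \<Rightarrow> nat \<Rightarrow> real"
    and H0 H1 H2 :: "(nat \<Rightarrow> real) \<Rightarrow> real"
    and \<alpha> \<beta> \<gamma> :: real and B :: "nat \<Rightarrow> nat \<Rightarrow> real"
    and f g :: "(nat \<Rightarrow> real) \<Rightarrow> nat \<Rightarrow> real"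
  assumes skewHam: "mat_eq6 (mmul (tr A) Jm) (mmul Jm A)"
    and cub0: "hom_cubic H0" and cub1: "hom_cubic H1" and cub2: "hom_cubic H2"
    and comm: "\<forall>x. mat_eq6 (mmul A (hess H0 x)) (mmul (hess H0 x) (tr A))"
    and g1: "\<forall>x. \<forall>i<6. grad H1 x i = mvec A (grad H0 x) i"
    and g2: "\<forall>x. \<forall>i<6. grad H2 x i = mvec A (grad H1 x) i"
    and Bsq: "mat_eq6 (mmul B B) idm"
    and Bdef: "B = (\<lambda>i j. \<alpha> * idm i j + \<beta> * A i j + \<gamma> * mmul A A i j)"
    and fdef: "f = hamvf H0"
    and gdef: "g = (\<lambda>x. mvec (tr B) (f x))"
  shows "\<forall>x (v :: nat \<Rightarrow> complex).
      mat_eq6 (d2v g x v) (d2v f x (mvec (cmat (tr B)) v))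
    \<and> mat_eq6 (d2v f x v) (d2v g x (mvec (cmat (tr B)) v))
    \<and> mat_eq6 (mmul (cmat (tr B)) (d2v f x v)) (d2v f x (mvec (cmat (tr B)) v))
    \<and> mat_eq6 (mmul (cmat (tr B)) (d2v g x v)) (d2v g x (mvec (cmat (tr B)) v))"
proof (intro allI)
  fix x :: "nat \<Rightarrow> real" and v :: "nat \<Rightarrow> complex"
  obtain c where hc: "\<forall>x. H0 x = (\<Sum>i<6. \<Sum>j<6. \<Sum>k<6. c i j k * x i * x j * x k)"
    using cub0 unfolding hom_cubic_def by blast
  define D where "D k a b = c k a b + c a k b + c a b k" for k a b
  define S where "S i j l = D i j l + D i l j" for i j l
  have Ss1: "S a b d = S b a d" for a b d unfolding S_def D_def by (simp add: ac_simps)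
  have Ss2: "S a b d = S a d b" for a b d unfolding S_def D_def by (simp add: ac_simps)
  have H0eq: "H0 = (\<lambda>x. \<Sum>i<6. \<Sum>j<6. \<Sum>k<6. c i j k * x i * x j * x k)"
    using hc by auto
  have gradH0: "pd k H0 y = (\<Sum>a<6. \<Sum>b<6. D k a b * y a * y b)" if "k < 6" for k y
    unfolding H0eq pd_cub[OF that] D_def ..
  have hessH0: "hess H0 y i j = (\<Sum>l<6. S i j l * y l)" if "i < 6" "j < 6" for i j y
  proof -
    have "(\<lambda>y. pd i H0 y) = (\<lambda>y. \<Sum>a<6. \<Sum>b<6. D i a b * y a * y b)"
      using gradH0[OF that(1)] by auto
    then show ?thesis unfolding hess_def S_def using pd_quad[OF that(2)] by simp
  qed
  have AS0: "(\<Sum>m<6. A i m * S m j k) = (\<Sum>m<6. S i m k * A j m)"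
    if "i < 6" "j < 6" "k < 6" for i j k
  proof -
    define e where "e = (\<lambda>n::nat. if n = k then 1 else (0::real))"
    have he: "hess H0 e p q = S p q k" if "p < 6" "q < 6" for p q
      unfolding hessH0[OF that] e_def using sd'[OF \<open>k < 6\<close>, of "S p q"] by simp
    have "mmul A (hess H0 e) i j = mmul (hess H0 e) (tr A) i j"
      using comm that unfolding mat_eq6_def by blast
    moreover have "mmul A (hess H0 e) i j = (\<Sum>m<6. A i m * S m j k)"
      unfolding mmul_def using he that by (intro sum.cong) auto
    moreover have "mmul (hess H0 e) (tr A) i j = (\<Sum>m<6. S i m k * A j m)"
      unfolding mmul_def tr_def using he that by (intro sum.cong) auto
    ultimately show ?thesis by simp
  qed
  have PSA: "PS S A"
    unfolding PS_def
  proof (intro allI impI)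
    fix p j l :: nat assume h: "p < 6" "j < 6" "l < 6"
    have "(\<Sum>k<6. A p k * S k j l) = (\<Sum>k<6. A p k * S k l j)" using Ss2 by simp
    also have "\<dots> = (\<Sum>m<6. S p m j * A l m)" using AS0[of p l j] h by simp
    also have "\<dots> = (\<Sum>n<6. S p j n * A l n)" using Ss2 by simp
    finally show "(\<Sum>k<6. A p k * S k j l) = (\<Sum>n<6. S p j n * A l n)" .
  qed
  have PSB: "PS S B" unfolding Bdef by (intro PS_lin PS_idm PSA PS_mul)
  have PJA: "PJ A"
    using skewHam unfolding PJ_def mat_eq6_def mmul_def tr_def by blast
  have PJB: "PJ B" unfolding Bdef by (intro PJ_lin PJ_idm PJA PJ_mul)
  define T where "T i j l = (\<Sum>k<6. Jm i k * S k j l)" for i j l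
  define F where "F i a b = (\<Sum>k<6. Jm i k * D k a b)" for i a b
  define G where "G i a b = (\<Sum>m<6. B m i * F m a b)" for i a b
  have fz: "\<forall>z. f z i = (\<Sum>a<6. \<Sum>b<6. F i a b * z a * z b)" if "i < 6" for i
  proof
    fix z
    have "f z i = (\<Sum>k<6. Jm i k * (\<Sum>a<6. \<Sum>b<6. D k a b * z a * z b))"
      unfolding fdef hamvf_def mvec_def grad_def using gradH0 by (intro sum.cong) auto
    then show "f z i = (\<Sum>a<6. \<Sum>b<6. F i a b * z a * z b)" unfolding F_def quad_comb .
  qed
  have gz: "\<forall>z. g z i = (\<Sum>a<6. \<Sum>b<6. G i a b * z a * z b)" if "i < 6" for i
  proof
    fix z
    have "g z i = (\<Sum>m<6. B m i * (\<Sum>a<6. \<Sum>b<6. F m a b * z a * z b))"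
      unfolding gdef mvec_def tr_def using fz by (intro sum.cong) auto
    then show "g z i = (\<Sum>a<6. \<Sum>b<6. G i a b * z a * z b)" unfolding G_def quad_comb .
  qed
  have FT: "F i j l + F i l j = T i j l" for i j l
    unfolding F_def T_def S_def by (simp add: sum.distrib algebra_simps)
  have GT: "G i j l + G i l j = (\<Sum>m<6. B m i * T m j l)" for i j l
    unfolding G_def FT[symmetric] by (simp add: sum.distrib algebra_simps)
  define Bt where "Bt = cmat (tr B)"
  define Mf where "Mf w i j = (\<Sum>l<6. complex_of_real (T i j l) * w l)" for w i j
  have df: "d2v f x w i j = Mf w i j" if "i < 6" "j < 6" for w i j
    unfolding d2v_def Mf_def using d2quad[where h=f and i=i and Q="F i", OF fz[OF that(1)] that(2)] FT by (intro sum.cong) auto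
  have dg: "d2v g x w i j = (\<Sum>l<6. complex_of_real (\<Sum>m<6. B m i * T m j l) * w l)" if "i < 6" "j < 6" for w i j
    unfolding d2v_def using d2quad[where h=g and i=i and Q="G i", OF gz[OF that(1)] that(2)] GT by (intro sum.cong) auto
  have BtM: "mmul Bt (Mf w) i j = (\<Sum>l<6. complex_of_real (\<Sum>m<6. B m i * T m j l) * w l)" for w i j
  proof -
    have "mmul Bt (Mf w) i j = (\<Sum>m<6. \<Sum>l<6. complex_of_real (B m i) * complex_of_real (T m j l) * w l)"
      unfolding mmul_def Bt_def cmat_def tr_def Mf_def by (simp add: sum_distrib_left mult_ac)
    also have "\<dots> = (\<Sum>l<6. \<Sum>m<6. complex_of_real (B m i) * complex_of_real (T m j l) * w l)"
      by (rule sum.swap)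
    also have "\<dots> = (\<Sum>l<6. complex_of_real (\<Sum>m<6. B m i * T m j l) * w l)"
      by (simp add: sum_distrib_right)
    finally show ?thesis .
  qed
  have MBt: "Mf (mvec Bt w) i j = (\<Sum>l<6. complex_of_real (\<Sum>n<6. T i j n * B l n) * w l)" for w i j
  proof -
    have "Mf (mvec Bt w) i j = (\<Sum>n<6. \<Sum>l<6. complex_of_real (T i j n) * complex_of_real (B l n) * w l)"
      unfolding Mf_def mvec_def Bt_def cmat_def tr_def by (simp add: sum_distrib_left mult_ac)
    also have "\<dots> = (\<Sum>l<6. \<Sum>n<6. complex_of_real (T i j n) * complex_of_real (B l n) * w l)"
      by (rule sum.swap)
    also have "\<dots> = (\<Sum>l<6. complex_of_real (\<Sum>n<6. T i j n * B l n) * w l)"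
      by (simp add: sum_distrib_right)
    finally show ?thesis .
  qed
  have key: "mmul Bt (Mf w) i j = Mf (mvec Bt w) i j" if "i < 6" "j < 6" for w i j
    unfolding BtM MBt using keyK[OF PSB PJB that] unfolding T_def by (intro sum.cong) auto
  have vv: "mvec Bt (mvec Bt w) l = w l" if "l < 6" for w l
  proof -
    have "mvec Bt (mvec Bt w) l = (\<Sum>k<6. \<Sum>p<6. complex_of_real (B k l) * complex_of_real (B p k) * w p)"
      unfolding mvec_def Bt_def cmat_def tr_def by (simp add: sum_distrib_left mult_ac)
    also have "\<dots> = (\<Sum>p<6. \<Sum>k<6. complex_of_real (B k l) * complex_of_real (B p k) * w p)"
      by (rule sum.swap)
    also have "\<dots> = (\<Sum>p<6. complex_of_real (mmul B B p l) * w p)"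
      unfolding mmul_def by (simp add: sum_distrib_right sum_distrib_left mult_ac)
    also have "\<dots> = (\<Sum>p<6. complex_of_real (idm p l) * w p)"
      using Bsq unfolding mat_eq6_def using that by (intro sum.cong) auto
    also have "\<dots> = (\<Sum>p<6. if p = l then w p else 0)" unfolding idm_def
      by (intro sum.cong) auto
    also have "\<dots> = w l" using that by simp
    finally show ?thesis .
  qed
  have Mfcong: "Mf (mvec Bt (mvec Bt w)) i j = Mf w i j" for w i j
    unfolding Mf_def using vv by (intro sum.cong) auto
  have c1: "d2v g x w i j = d2v f x (mvec Bt w) i j" if "i < 6" "j < 6" for w i j
    using dg[OF that] df[OF that] key[OF that] BtM by simp
  have c3: "mmul Bt (d2v f x w) i j = d2v f x (mvec Bt w) i j" if "i < 6" "j < 6" for w i j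
  proof -
    have "mmul Bt (d2v f x w) i j = mmul Bt (Mf w) i j"
      by (rule mmul_cong_r) (simp add: df that)
    then show ?thesis using key[OF that] df[OF that] by simp
  qed
  have c2: "d2v f x w i j = d2v g x (mvec Bt w) i j" if "i < 6" "j < 6" for w i j
    using c1[OF that, of "mvec Bt w"] df[OF that] Mfcong by simp
  have c4: "mmul Bt (d2v g x w) i j = d2v g x (mvec Bt w) i j" if "i < 6" "j < 6" for w i j
  proof -
    have "mmul Bt (d2v g x w) i j = mmul Bt (d2v f x (mvec Bt w)) i j"
      by (rule mmul_cong_r) (simp add: c1 that)
    also have "\<dots> = d2v f x (mvec Bt (mvec Bt w)) i j" by (rule c3[OF that])
    also have "\<dots> = d2v f x w i j" using df[OF that] Mfcong by simp
    also have "\<dots> = d2v g x (mvec Bt w) i j" by (rule c2[OF that])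
    finally show ?thesis .
  qed
  show "mat_eq6 (d2v g x v) (d2v f x (mvec (cmat (tr B)) v))
    \<and> mat_eq6 (d2v f x v) (d2v g x (mvec (cmat (tr B)) v))
    \<and> mat_eq6 (mmul (cmat (tr B)) (d2v f x v)) (d2v f x (mvec (cmat (tr B)) v))
    \<and> mat_eq6 (mmul (cmat (tr B)) (d2v g x v)) (d2v g x (mvec (cmat (tr B)) v))"
    unfolding mat_eq6_def Bt_def[symmetric] using c1 c2 c3 c4 by blast
qed

end
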